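(* Let $F$ be a field of characteristic not 2 or 3 and $E$ an étale cubic $F$-algebra. For a cube $v=(a,e,f,b)\in V_E(F)$ define $\tilde\phi(v)=(Q,\beta)$, a pair consisting of a quadratic form $Q:E^2\to E$ and a quadratic map $\beta:E^2\to E^2$, by \[Q(x,y)=(e^\#-af)x^2+(-ab-2ef+\mathrm{Tr}_E(ef))xy+(f^\#-be)y^2,\] \[\beta(x,y)=\big(-ex^\#-by^\#-(fx)\times y,\ ax^\#+fy^\#+(ey)\times x\big).\] Then: (i) $\tilde\phi$ is injective. (ii) For $g\in GL_2(E)^0$ and $\sigma\in S_E(F)$, $\tilde\phi(g\cdot v)={}^tg^{-1}\cdot\tilde\phi(v)$ and $\tilde\phi(\sigma\cdot v)=\sigma\cdot\tilde\phi(v)$, where $h\in GL_2(E)$ acts on pairs by $h\cdot(Q,\beta)=(Q\circ h^{-1},h\circ\beta\circ h^{-1})$ and $\sigma$ acts by $\sigma\cdot(Q,\beta)=(\sigma\circ Q\circ\sigma^{-1},\sigma\circ\beta\circ\sigma^{-1})$ with $\sigma$ acting coordinatewise on $E^2$. (iii) For every cube $v$ with $\Delta_E(v)\neq0$, $\tilde\phi(v)=(Q,\beta)$ makes $E^2$ into an $E$-twisted composition algebra.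
   Context: Étale cubic $E$ with norm $N_E$, trace $\mathrm{Tr}_E$, adjoint $x^\#$ ($xx^\#=N_E(x)$, for $E=F^3$: $(x_1,x_2,x_3)^\#=(x_2x_3,x_3x_1,x_1x_2)$), $x\times y=(x+y)^\#-x^\#-y^\#$. An $E$-twisted composition algebra structure on $C=E^2$ is a pair $(Q,\beta)$: $Q:C\to E$ nondegenerate quadratic with polar $b_Q$, $\beta:C\to C$ quadratic with $\beta(av)=a^\#\beta(v)$, $Q(\beta(v))=Q(v)^\#$, $b_Q(v,\beta(v))\in F$ for all $v$. $GL_2(E)^0=\{g\in GL_2(E):\det g\in F^\times\}$ and $S_E(F)=\mathrm{Aut}_F(E)$ act on $V_E(F)=F\oplus E\oplus E\oplus F$ via the Galois-descended form of the split action (for $E=F^3$: $V=F^2\otimes F^2\otimes F^2$, $a,b$ coefficients of $u_1^{\otimes3},u_2^{\otimes3}$, $e_i$ (resp. $f_i$) coefficient of the basis vector with $u_2$ (resp. $u_1$) in factor $i$ and $u_1$ (resp. $u_2$) elsewhere, $(g_1,g_2,g_3)$ of common determinant $d$ acting by $d^{-1}g_1\otimes g_2\otimes g_3$, $S_3$ permuting factors); $\sigma\in S_E(F)$ acts by $(a,e,f,b)\mapsto(a,\sigma e,\sigma f,b)$. $\Delta_E(a,e,f,b)=a^2b^2-2ab\mathrm{Tr}_E(ef)+\mathrm{Tr}_E(e^2f^2)+4aN_E(f)+4bN_E(e)-2\mathrm{Tr}_E(e^\#f^\#)$. *)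

theory Defs
  imports "HOL-Analysis.Analysis"
begin

text \<open>An etale cubic F-algebra E is modelled (up to isomorphism, after choosing an F-basis)
  as the F-vector space F^3 (type 'f^3) equipped with an F-bilinear, commutative, associative
  multiplication m with unit u whose trace form is nondegenerate.\<close>

type_synonym 'f Ealg = "'f^3"
type_synonym 'f Emul = "'f^3 \<Rightarrow> 'f^3 \<Rightarrow> 'f^3"
type_synonym 'f Cpair = "('f^3) \<times> ('f^3)"
type_synonym 'f cube = "'f \<times> ('f^3) \<times> ('f^3) \<times> 'f"
type_synonym 'f Emat = "('f^3) \<times> ('f^3) \<times> ('f^3) \<times> ('f^3)"  \<comment> \<open>(g11, g12, g21, g22) in M_2(E)\<close>

definition mult_mat :: "'f::field Emul \<Rightarrow> 'f^3 \<Rightarrow> 'f^3^3" where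
  "mult_mat m x = (\<chi> i j. (m x (axis j 1)) $ i)"

definition Etr :: "'f::field Emul \<Rightarrow> 'f^3 \<Rightarrow> 'f" where
  "Etr m x = trace (mult_mat m x)"

definition Enorm :: "'f::field Emul \<Rightarrow> 'f^3 \<Rightarrow> 'f" where
  "Enorm m x = det (mult_mat m x)"

text \<open>Second coefficient of the characteristic polynomial of multiplication by x.\<close>
definition Esec :: "'f::field Emul \<Rightarrow> 'f^3 \<Rightarrow> 'f" where
  "Esec m x = ((trace (mult_mat m x))^2 - trace (mult_mat m x ** mult_mat m x)) / 2"

text \<open>The adjoint x^# = x^2 - Tr(x) x + S(x), so that x x^# = N(x) (Cayley--Hamilton).\<close>
definition Eadj :: "'f::field Emul \<Rightarrow> 'f^3 \<Rightarrow> 'f^3 \<Rightarrow> 'f^3" where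
  "Eadj m u x = m x x - Etr m x *s x + Esec m x *s u"

definition Ecross :: "'f::field Emul \<Rightarrow> 'f^3 \<Rightarrow> 'f^3 \<Rightarrow> 'f^3 \<Rightarrow> 'f^3" where
  "Ecross m u x y = Eadj m u (x + y) - Eadj m u x - Eadj m u y"

definition etale_cubic :: "'f::field Emul \<Rightarrow> 'f^3 \<Rightarrow> bool" where
  "etale_cubic m u \<longleftrightarrow>
     (\<forall>x y z. m (x + y) z = m x z + m y z) \<and>
     (\<forall>c x y. m (c *s x) y = c *s m x y) \<and>
     (\<forall>x y. m x y = m y x) \<and>
     (\<forall>x y z. m (m x y) z = m x (m y z)) \<and>
     (\<forall>x. m u x = x) \<and>
     (\<forall>x. (\<forall>y. Etr m (m x y) = 0) \<longrightarrow> x = 0)"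

text \<open>F-algebra automorphisms of E, i.e. S_E(F) = Aut_F(E).\<close>
definition F_alg_aut :: "'f::field Emul \<Rightarrow> 'f^3 \<Rightarrow> ('f^3 \<Rightarrow> 'f^3) \<Rightarrow> bool" where
  "F_alg_aut m u \<sigma> \<longleftrightarrow> bij \<sigma> \<and> (\<forall>x y. \<sigma> (x + y) = \<sigma> x + \<sigma> y) \<and>
     (\<forall>c x. \<sigma> (c *s x) = c *s \<sigma> x) \<and> (\<forall>x y. \<sigma> (m x y) = m (\<sigma> x) (\<sigma> y)) \<and> \<sigma> u = u"

definition phi_Q :: "'f::field Emul \<Rightarrow> 'f^3 \<Rightarrow> 'f cube \<Rightarrow> 'f Cpair \<Rightarrow> 'f^3" where
  "phi_Q m u v w = (case v of (a, e, f, b) \<Rightarrow> (case w of (x, y) \<Rightarrow>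
      m (Eadj m u e - a *s f) (m x x)
    + m ((- (a * b)) *s u - 2 *s m e f + Etr m (m e f) *s u) (m x y)
    + m (Eadj m u f - b *s e) (m y y)))"

definition phi_beta :: "'f::field Emul \<Rightarrow> 'f^3 \<Rightarrow> 'f cube \<Rightarrow> 'f Cpair \<Rightarrow> 'f Cpair" where
  "phi_beta m u v w = (case v of (a, e, f, b) \<Rightarrow> (case w of (x, y) \<Rightarrow>
     (- m e (Eadj m u x) - b *s Eadj m u y - Ecross m u (m f x) y,
      a *s Eadj m u x + m f (Eadj m u y) + Ecross m u (m e y) x)))"

definition phi :: "'f::field Emul \<Rightarrow> 'f^3 \<Rightarrow> 'f cube \<Rightarrow> ('f Cpair \<Rightarrow> 'f^3) \<times> ('f Cpair \<Rightarrow> 'f Cpair)" where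
  "phi m u v = (phi_Q m u v, phi_beta m u v)"

definition Delta :: "'f::field Emul \<Rightarrow> 'f^3 \<Rightarrow> 'f cube \<Rightarrow> 'f" where
  "Delta m u v = (case v of (a, e, f, b) \<Rightarrow>
     a^2 * b^2 - 2 * a * b * Etr m (m e f) + Etr m (m (m e e) (m f f))
     + 4 * a * Enorm m f + 4 * b * Enorm m e - 2 * Etr m (m (Eadj m u e) (Eadj m u f)))"

definition Emat_det :: "'f::field Emul \<Rightarrow> 'f Emat \<Rightarrow> 'f^3" where
  "Emat_det m g = (case g of (g11, g12, g21, g22) \<Rightarrow> m g11 g22 - m g12 g21)"

definition Emat_apply :: "'f::field Emul \<Rightarrow> 'f Emat \<Rightarrow> 'f Cpair \<Rightarrow> 'f Cpair" where
  "Emat_apply m h w = (case h of (h11, h12, h21, h22) \<Rightarrow> (case w of (x, y) \<Rightarrow>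
     (m h11 x + m h12 y, m h21 x + m h22 y)))"

definition Emat_trans :: "'f Emat \<Rightarrow> 'f Emat" where
  "Emat_trans g = (case g of (g11, g12, g21, g22) \<Rightarrow> (g11, g21, g12, g22))"

definition Einv :: "'f::field Emul \<Rightarrow> 'f^3 \<Rightarrow> 'f^3 \<Rightarrow> 'f^3" where
  "Einv m u z = (THE w. m z w = u)"

definition Emat_inv :: "'f::field Emul \<Rightarrow> 'f^3 \<Rightarrow> 'f Emat \<Rightarrow> 'f Emat" where
  "Emat_inv m u g = (case g of (g11, g12, g21, g22) \<Rightarrow>
     (let di = Einv m u (Emat_det m g) in (m di g22, - m di g12, - m di g21, m di g11)))"

definition GL2_0 :: "'f::field Emul \<Rightarrow> 'f^3 \<Rightarrow> 'f Emat \<Rightarrow> bool" where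
  "GL2_0 m u g \<longleftrightarrow> (\<exists>d. d \<noteq> 0 \<and> Emat_det m g = d *s u)"

definition det_scalar :: "'f::field Emul \<Rightarrow> 'f^3 \<Rightarrow> 'f Emat \<Rightarrow> 'f" where
  "det_scalar m u g = (THE d. Emat_det m g = d *s u)"

text \<open>The F-valued cubic form on E^2 attached to a cube (the pairing of the cube with
  (x_1 u_1^* + y_1 u_2^*) (x) (x_2 u_1^* + y_2 u_2^*) (x) (x_3 u_1^* + y_3 u_2^*) in the split case).\<close>
definition cube_form :: "'f::field Emul \<Rightarrow> 'f^3 \<Rightarrow> 'f cube \<Rightarrow> 'f Cpair \<Rightarrow> 'f" where
  "cube_form m u v w = (case v of (a, e, f, b) \<Rightarrow> (case w of (x, y) \<Rightarrow>
     a * Enorm m x + Etr m (m e (m y (Eadj m u x))) + Etr m (m f (m x (Eadj m u y))) + b * Enorm m y))"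

text \<open>g . v is the cube whose form is w |-> det(g)^{-1} P_v(w g), w a row vector; in the split
  case this is exactly d^{-1} g_1 (x) g_2 (x) g_3.\<close>
definition cube_act :: "'f::field Emul \<Rightarrow> 'f^3 \<Rightarrow> 'f Emat \<Rightarrow> 'f cube \<Rightarrow> 'f cube" where
  "cube_act m u g v = (THE v'. \<forall>w. cube_form m u v' w
       = inverse (det_scalar m u g) * cube_form m u v (Emat_apply m (Emat_trans g) w))"

definition cube_gal :: "('f^3 \<Rightarrow> 'f^3) \<Rightarrow> 'f cube \<Rightarrow> 'f cube" where
  "cube_gal \<sigma> v = (case v of (a, e, f, b) \<Rightarrow> (a, \<sigma> e, \<sigma> f, b))"

definition pair_act :: "'f::field Emul \<Rightarrow> 'f^3 \<Rightarrow> 'f Emat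
    \<Rightarrow> ('f Cpair \<Rightarrow> 'f^3) \<times> ('f Cpair \<Rightarrow> 'f Cpair) \<Rightarrow> ('f Cpair \<Rightarrow> 'f^3) \<times> ('f Cpair \<Rightarrow> 'f Cpair)" where
  "pair_act m u h p = (case p of (Q, \<beta>) \<Rightarrow>
     (Q \<circ> Emat_apply m (Emat_inv m u h),
      Emat_apply m h \<circ> \<beta> \<circ> Emat_apply m (Emat_inv m u h)))"

definition pair_gal :: "('f^3 \<Rightarrow> 'f^3)
    \<Rightarrow> ('f Cpair \<Rightarrow> 'f^3) \<times> ('f Cpair \<Rightarrow> 'f Cpair) \<Rightarrow> ('f Cpair \<Rightarrow> 'f^3) \<times> ('f Cpair \<Rightarrow> 'f Cpair)" where
  "pair_gal \<sigma> p = (case p of (Q, \<beta>) \<Rightarrow>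
     (\<sigma> \<circ> Q \<circ> map_prod (inv \<sigma>) (inv \<sigma>),
      map_prod \<sigma> \<sigma> \<circ> \<beta> \<circ> map_prod (inv \<sigma>) (inv \<sigma>)))"

definition Cscal :: "'f::field Emul \<Rightarrow> 'f^3 \<Rightarrow> 'f Cpair \<Rightarrow> 'f Cpair" where
  "Cscal m a w = (m a (fst w), m a (snd w))"

definition polar :: "('a::ab_group_add \<Rightarrow> 'b::ab_group_add) \<Rightarrow> 'a \<Rightarrow> 'a \<Rightarrow> 'b" where
  "polar q v w = q (v + w) - q v - q w"

definition twisted_comp_alg :: "'f::field Emul \<Rightarrow> 'f^3 \<Rightarrow> ('f Cpair \<Rightarrow> 'f^3) \<Rightarrow> ('f Cpair \<Rightarrow> 'f Cpair) \<Rightarrow> bool" where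
  "twisted_comp_alg m u Q \<beta> \<longleftrightarrow>
     \<comment> \<open>Q is an E-valued quadratic form over E with E-bilinear polar b_Q\<close>
     (\<forall>a v. Q (Cscal m a v) = m (m a a) (Q v)) \<and>
     (\<forall>v v' w. polar Q (v + v') w = polar Q v w + polar Q v' w) \<and>
     (\<forall>a v w. polar Q (Cscal m a v) w = m a (polar Q v w)) \<and>
     \<comment> \<open>b_Q nondegenerate\<close>
     (\<forall>v. (\<forall>w. polar Q v w = 0) \<longrightarrow> v = 0) \<and>
     \<comment> \<open>beta is a quadratic map (over F) with beta(a v) = a^# beta(v)\<close>
     (\<forall>v v' w. polar \<beta> (v + v') w = polar \<beta> v w + polar \<beta> v' w) \<and>
     (\<forall>c v w. polar \<beta> (Cscal m (c *s u) v) w = Cscal m (c *s u) (polar \<beta> v w)) \<and>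
     (\<forall>a v. \<beta> (Cscal m a v) = Cscal m (Eadj m u a) (\<beta> v)) \<and>
     (\<forall>v. Q (\<beta> v) = Eadj m u (Q v)) \<and>
     (\<forall>v. \<exists>c. polar Q v (\<beta> v) = c *s u)"

end

theory Submission
  imports Defs "HOL-Algebra.Algebraic_Closure_Type"
begin

no_notation Formal_Power_Series.fps_nth (infixl \<open>$\<close> 75)

lemma CH3_aux:
  fixes A :: "'a::field^3^3"
  shows "2 *s (A *v (A *v (A *v v))) - 2 * trace A *s (A *v (A *v v))
     + (trace A ^ 2 - trace (A ** A)) *s (A *v v) - 2 * det A *s v = 0"
    apply (simp add: vec_eq_iff forall_3 matrix_vector_mult_def sum_3 det_3 trace_def
        matrix_matrix_mult_def)
    apply (intro conjI; Groebner_Basis.algebra)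
    done

lemma CH3:
  fixes A :: "'a::field^3^3"
  assumes "(2::'a) \<noteq> 0"
  shows "A *v (A *v (A *v v)) - trace A *s (A *v (A *v v))
     + ((trace A ^ 2 - trace (A ** A)) / 2) *s (A *v v) - det A *s v = 0"
proof -
  have "(2::'a) * 2 \<noteq> 0" using assms by (subst mult_eq_0_iff) simp
  then have four: "(4::'a) \<noteq> 0" by simp
  have "A *v (A *v (A *v v)) - trace A *s (A *v (A *v v))
     + ((trace A ^ 2 - trace (A ** A)) / 2) *s (A *v v) - det A *s v = inverse 2 *s
    (2 *s (A *v (A *v (A *v v))) - 2 * trace A *s (A *v (A *v v))
     + (trace A ^ 2 - trace (A ** A)) *s (A *v v) - 2 * det A *s v)"
    using assms four by (simp add: vec_eq_iff field_simps)
  then show ?thesis using CH3_aux[of A v] by (metis vector_smult_rzero)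
qed

lemma basis3: "(y::'a::comm_ring_1^3) = y$1 *s axis 1 1 + y$2 *s axis 2 1 + y$3 *s axis 3 1"
  by (simp add: vec_eq_iff forall_3 axis_def)

locale ecub =
  fixes m :: "'f::field^3 \<Rightarrow> 'f^3 \<Rightarrow> 'f^3" and u :: "'f^3"
  assumes E: "etale_cubic m u" and two: "(2::'f) \<noteq> 0" and three: "(3::'f) \<noteq> 0"
begin

lemmas E' = E[unfolded etale_cubic_def]
lemma madd_l: "m (x + y) z = m x z + m y z" by (rule E'[THEN conjunct1, rule_format])
lemma msc_l: "m (c *s x) y = c *s m x y" by (rule E'[THEN conjunct2, THEN conjunct1, rule_format])
lemma mcomm: "m x y = m y x" by (rule E'[THEN conjunct2, THEN conjunct2, THEN conjunct1, rule_format])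
lemma massoc: "m (m x y) z = m x (m y z)" by (rule E'[THEN conjunct2, THEN conjunct2, THEN conjunct2, THEN conjunct1, rule_format])
lemma munit_l: "m u x = x" by (rule E'[THEN conjunct2, THEN conjunct2, THEN conjunct2, THEN conjunct2, THEN conjunct1, rule_format])
lemma etale_nd: "(\<And>y. Etr m (m x y) = 0) \<Longrightarrow> x = 0"
  using E'[THEN conjunct2, THEN conjunct2, THEN conjunct2, THEN conjunct2, THEN conjunct2] by blast
lemma munit_r: "m x u = x" using munit_l mcomm by metis
lemma madd_r: "m z (x + y) = m z x + m z y" using madd_l mcomm by metis
lemma msc_r: "m y (c *s x) = c *s m y x" using msc_l mcomm by metis
lemma m0_l: "m 0 y = 0" using msc_l[of 0 0 y] by simp
lemma m0_r: "m y 0 = 0" using m0_l mcomm by metis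
lemma mneg_l: "m (- x) y = - m x y" using msc_l[of "-1" x y] by (simp add: vector_sneg_minus1[symmetric])
lemma mneg_r: "m y (- x) = - m y x" using mneg_l mcomm by metis
lemma mdiff_l: "m (x - y) z = m x z - m y z" using madd_l[of x "-y" z] mneg_l by simp
lemma mdiff_r: "m z (x - y) = m z x - m z y" using mdiff_l mcomm by metis

lemmas mlin = madd_l madd_r msc_l msc_r m0_l m0_r mneg_l mneg_r mdiff_l mdiff_r munit_l munit_r

lemma mm_apply: "mult_mat m x *v y = m x y"
proof -
  have "m x y = m x (y$1 *s axis 1 1 + y$2 *s axis 2 1 + y$3 *s axis 3 1)"
    by (simp add: basis3[symmetric])
  also have "\<dots> = y$1 *s m x (axis 1 1) + y$2 *s m x (axis 2 1) + y$3 *s m x (axis 3 1)"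
    by (simp add: madd_r msc_r)
  finally show ?thesis
    by (simp add: vec_eq_iff mult_mat_def matrix_vector_mult_def sum_3 mult.commute)
qed

lemma mm_mult: "mult_mat m (m x y) = mult_mat m x ** mult_mat m y"
  by (simp add: matrix_eq mm_apply matrix_vector_mul_assoc[symmetric] massoc)

lemma Etr_expl: "Etr m x = (m x (axis 1 1))$1 + (m x (axis 2 1))$2 + (m x (axis 3 1))$3"
  by (simp add: Etr_def trace_def mult_mat_def sum_3)

lemma Etr_add: "Etr m (x + y) = Etr m x + Etr m y"
  by (simp add: Etr_expl madd_l)
lemma Etr_smult: "Etr m (c *s x) = c * Etr m x"
  by (simp add: Etr_expl msc_l algebra_simps)
lemma Etr_neg: "Etr m (- x) = - Etr m x"
  by (simp add: Etr_expl mneg_l algebra_simps)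
lemma Etr_diff: "Etr m (x - y) = Etr m x - Etr m y"
  by (simp add: Etr_expl mdiff_l algebra_simps)
lemma Etr_u: "Etr m u = 3"
  by (simp add: Etr_expl munit_l axis_def)

lemma Esec_alt: "Esec m x = ((Etr m x)^2 - Etr m (m x x)) / 2"
  by (simp add: Esec_def Etr_def mm_mult)

lemma CH_E: "m x (m x x) - Etr m x *s m x x + Esec m x *s x - Enorm m x *s u = 0"
proof -
  have "mult_mat m x *v u = x" by (simp add: mm_apply munit_r)
  then show ?thesis
    using CH3[OF two, of "mult_mat m x" u]
    by (simp add: mm_apply Esec_def Etr_def Enorm_def)
qed

lemma adj_N: "m x (Eadj m u x) = Enorm m x *s u"
proof -
  have "m x (Eadj m u x) = m x (m x x) - Etr m x *s m x x + Esec m x *s x"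
    by (simp add: Eadj_def mlin)
  then show ?thesis using CH_E[of x] by (simp add: algebra_simps)
qed

lemma u_nz: "u \<noteq> 0"
proof
  assume "u = 0"
  then have "axis 1 (1::'f) = 0" using munit_l[of "axis 1 1"] m0_l by simp
  then have "(axis 1 (1::'f)) $ 1 = 0" by simp
  then show False by simp
qed

end

definition det3 :: "'a::comm_ring_1^3 \<Rightarrow> 'a^3 \<Rightarrow> 'a^3 \<Rightarrow> 'a" where
  "det3 a b c = a$1*(b$2*c$3 - b$3*c$2) - a$2*(b$1*c$3 - b$3*c$1) + a$3*(b$1*c$2 - b$2*c$1)"

lemma det3_3: "det3 a b (al *s a + be *s b + ga *s c) = ga * det3 a b c"
  by (simp add: det3_def algebra_simps)
lemma det3_2: "det3 a (al *s a + be *s b + ga *s c) c = be * det3 a b c"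
  by (simp add: det3_def algebra_simps)
lemma det3_1: "det3 (al *s a + be *s b + ga *s c) b c = al * det3 a b c"
  by (simp add: det3_def algebra_simps)

lemma cramer:
  fixes a b c z :: "'a::field^3"
  assumes "det3 a b c \<noteq> 0"
  shows "z = (det3 z b c / det3 a b c) *s a + (det3 a z c / det3 a b c) *s b + (det3 a b z / det3 a b c) *s c"
proof -
  have "det3 a b c *s z = det3 z b c *s a + det3 a z c *s b + det3 a b z *s c"
    apply (simp add: vec_eq_iff forall_3 det3_def)
    apply (intro conjI; Groebner_Basis.algebra)
    done
  then have "z = inverse (det3 a b c) *s (det3 z b c *s a + det3 a z c *s b + det3 a b z *s c)"
    using assms by (metis vector_smult_assoc left_inverse vector_smult_lid)
  then show ?thesis by (simp add: vector_add_ldistrib vector_smult_assoc divide_inverse mult.commute)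
qed

lemma coord_unique:
  fixes a b c :: "'a::field^3"
  assumes "det3 a b c \<noteq> 0" and "al *s a + be *s b + ga *s c = al' *s a + be' *s b + ga' *s c"
  shows "al = al'" "be = be'" "ga = ga'"
proof -
  from det3_1[of al a be b ga c] det3_1[of al' a be' b ga' c] assms show "al = al'" by simp
  from det3_2[of a al be b ga c] det3_2[of a al' be' b ga' c] assms show "be = be'" by simp
  from det3_3[of a b al be ga c] det3_3[of a b al' be' ga' c] assms show "ga = ga'" by simp
qed

context ecub begin

lemma sq0_tr0: assumes "m w w = 0" shows "Etr m w = 0"
proof -
  have ch: "Esec m w *s w = Enorm m w *s u"
    using CH_E[of w] assms m0_r by (simp add: algebra_simps)
  show ?thesis
  proof (cases "Esec m w = 0")
    case True
    then have "(Etr m w)^2 = 0" using Esec_alt[of w] assms two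
      by (simp add: Etr_expl m0_l)
    then show ?thesis by simp
  next
    case False
    then have w: "w = (Enorm m w / Esec m w) *s u"
      using ch by (metis (no_types, lifting) divide_inverse_commute left_inverse mult.commute
          vector_smult_assoc vector_smult_lid)
    have "m w w = ((Enorm m w / Esec m w) * (Enorm m w / Esec m w)) *s u"
      by (subst w, subst w) (simp add: msc_l msc_r munit_l vector_smult_assoc)
    then have "(Enorm m w / Esec m w) * (Enorm m w / Esec m w) = 0" using assms u_nz
      by (metis vector_mul_eq_0)
    then have "Enorm m w / Esec m w = 0" by simp
    then have "w = 0" using w by (metis vector_smult_lzero)
    then show ?thesis by (simp add: Etr_expl m0_l)
  qed
qed

lemma basis_exists: "\<exists>x y. det3 u x y \<noteq> 0"
proof -
  obtain i where "u $ i \<noteq> 0" using u_nz by (auto simp: vec_eq_iff)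
  then have "u$1 \<noteq> 0 \<or> u$2 \<noteq> 0 \<or> u$3 \<noteq> 0" by (metis exhaust_3)
  then show ?thesis
  proof (elim disjE)
    assume "u$1 \<noteq> 0" then show ?thesis
      by (intro exI[of _ "axis 2 1"] exI[of _ "axis 3 1"]) (simp add: det3_def axis_def)
  next
    assume "u$2 \<noteq> 0" then show ?thesis
      by (intro exI[of _ "axis 3 1"] exI[of _ "axis 1 1"]) (simp add: det3_def axis_def)
  next
    assume "u$3 \<noteq> 0" then show ?thesis
      by (intro exI[of _ "axis 1 1"] exI[of _ "axis 2 1"]) (simp add: det3_def axis_def)
  qed
qed

end

context ecub begin

lemma primitive: "\<exists>t. det3 u t (m t t) \<noteq> 0"
proof (rule ccontr)
  assume "\<not> ?thesis"
  then have dep: "\<And>t. det3 u t (m t t) = 0" by blast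
  obtain x y where D: "det3 u x y \<noteq> 0" using basis_exists by blast
  define D0 where "D0 = det3 u x y"
  have cr: "\<And>z. z = (det3 z x y / D0) *s u + (det3 u z y / D0) *s x + (det3 u x z / D0) *s y"
    using cramer[OF D] D0_def by blast
  define A1 where "A1 = det3 (m x x) x y / D0"
  define B1 where "B1 = det3 u (m x x) y / D0"
  define C1 where "C1 = det3 u x (m x x) / D0"
  define A2 where "A2 = det3 (m y y) x y / D0"
  define B2 where "B2 = det3 u (m y y) y / D0"
  define C2 where "C2 = det3 u x (m y y) / D0"
  define A3 where "A3 = det3 (m x y) x y / D0"
  define B3 where "B3 = det3 u (m x y) y / D0"
  define C3 where "C3 = det3 u x (m x y) / D0"
  have xx: "m x x = A1 *s u + B1 *s x + C1 *s y" using cr[of "m x x"] A1_def B1_def C1_def by simp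
  have yy: "m y y = A2 *s u + B2 *s x + C2 *s y" using cr[of "m y y"] A2_def B2_def C2_def by simp
  have xy: "m x y = A3 *s u + B3 *s x + C3 *s y" using cr[of "m x y"] A3_def B3_def C3_def by simp
  have C1z: "C1 = 0"
  proof -
    have "det3 u x (m x x) = C1 * D0" using det3_3[of u x A1 B1 C1 y] xx D0_def by simp
    then show ?thesis using dep[of x] D D0_def by simp
  qed
  have B2z: "B2 = 0"
  proof -
    have "det3 u y (m y y) = - B2 * det3 u x y" unfolding yy
      by (simp add: det3_def algebra_simps)
    then show ?thesis using dep[of y] D D0_def by simp
  qed
  have sp: "m (x + y) (x + y) = (A1 + 2*A3 + A2) *s u + (B1 + 2*B3 + B2) *s x + (C1 + 2*C3 + C2) *s y"
    using xx yy xy by (simp add: madd_l madd_r mcomm[of y x] vec_eq_iff algebra_simps)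
  have sm: "m (x - y) (x - y) = (A1 - 2*A3 + A2) *s u + (B1 - 2*B3 + B2) *s x + (C1 - 2*C3 + C2) *s y"
    using xx yy xy by (simp add: mdiff_l mdiff_r mcomm[of y x] vec_eq_iff algebra_simps)
  have e1: "(C1 + 2*C3 + C2) - (B1 + 2*B3 + B2) = 0"
  proof -
    have "det3 u (x + y) (m (x + y) (x + y)) = ((C1 + 2*C3 + C2) - (B1 + 2*B3 + B2)) * D0"
      unfolding sp D0_def by (simp add: det3_def algebra_simps)
    then show ?thesis using dep[of "x+y"] D D0_def by simp
  qed
  have e2: "(C1 - 2*C3 + C2) + (B1 - 2*B3 + B2) = 0"
  proof -
    have "det3 u (x - y) (m (x - y) (x - y)) = ((C1 - 2*C3 + C2) + (B1 - 2*B3 + B2)) * D0"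
      unfolding sm D0_def by (simp add: det3_def algebra_simps)
    then show ?thesis using dep[of "x-y"] D D0_def by simp
  qed
  have B1e: "2 * B1 = 4 * C3" using e1 e2 C1z B2z by Groebner_Basis.algebra
  have B1v: "B1 = 2 * C3" using B1e two by Groebner_Basis.algebra
  have lhs: "m x (m x y) = (B3*A1 + C3*A3) *s u + (A3 + B3*B1 + C3*B3) *s x + (C3*C3) *s y"
    unfolding xy using xx xy C1z
    by (simp add: madd_r msc_r munit_r vec_eq_iff algebra_simps)
  have rhs: "m (m x x) y = (B1*A3) *s u + (B1*B3) *s x + (A1 + B1*C3) *s y"
    unfolding xx using xy C1z
    by (simp add: madd_l msc_l munit_l vec_eq_iff algebra_simps)
  have "m x (m x y) = m (m x x) y" by (simp add: massoc)
  then have "C3*C3 = A1 + B1*C3" using coord_unique(3)[OF D] lhs rhs by metis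
  then have A1v: "A1 = - (C3 * C3)" using B1v by Groebner_Basis.algebra
  define n where "n = x - C3 *s u"
  have nn: "m n n = 0"
    unfolding n_def using xx A1v B1v C1z
    by (simp add: mdiff_l mdiff_r msc_l msc_r munit_l munit_r vec_eq_iff algebra_simps)
  have "n \<noteq> 0"
  proof
    assume "n = 0"
    then have "x = C3 *s u" unfolding n_def by simp
    then have "det3 u x y = 0" by (simp add: det3_def algebra_simps)
    then show False using D by simp
  qed
  moreover have "Etr m (m n z) = 0" for z
  proof -
    have "m (m n z) (m n z) = m (m n n) (m z z)" by (metis massoc mcomm)
    then show ?thesis using sq0_tr0 nn m0_l by simp
  qed
  ultimately show False using etale_nd by blast
qed

end

lemma cubic_split:
  fixes a b c :: "'k::alg_closed_field"
  shows "\<exists>l1 l2 l3. l1 + l2 + l3 = a \<and> l1*l2 + l2*l3 + l3*l1 = b \<and> l1*l2*l3 = c"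
proof -
  define f where "f = (\<lambda>k::nat. if k = 0 then -c else if k = 1 then b else if k = 2 then -a else (1::'k))"
  obtain x where "(\<Sum>k\<le>3. f k * x ^ k) = 0" using alg_closed[of 3 f] by (auto simp: f_def)
  then have r1: "x^3 - a*x^2 + b*x - c = 0"
    by (simp add: f_def numeral_3_eq_3 atMost_Suc algebra_simps power2_eq_square power3_eq_cube)
  define p where "p = x - a"
  define q where "q = b + x * p"
  define g where "g = (\<lambda>k::nat. if k = 0 then q else if k = 1 then p else (1::'k))"
  obtain y where "(\<Sum>k\<le>2. g k * y ^ k) = 0" using alg_closed[of 2 g] by (auto simp: g_def)
  then have r2: "y^2 + p*y + q = 0"
    by (simp add: g_def numeral_2_eq_2 atMost_Suc algebra_simps power2_eq_square)
  define z where "z = - p - y"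
  have "x + y + z = a" by (simp add: z_def p_def)
  moreover have "x*y + y*z + z*x = b"
    using r2 unfolding z_def q_def p_def by Groebner_Basis.algebra
  moreover have "x*y*z = c"
    using r1 r2 unfolding z_def q_def p_def by Groebner_Basis.algebra
  ultimately show ?thesis by blast
qed

definition sadj :: "'a::comm_ring_1^3 \<Rightarrow> 'a^3" where
  "sadj x = vector [x$2*x$3, x$3*x$1, x$1*x$2]"
definition str :: "'a::comm_ring_1^3 \<Rightarrow> 'a" where
  "str x = x$1 + x$2 + x$3"
definition ssec :: "'a::comm_ring_1^3 \<Rightarrow> 'a" where
  "ssec x = x$1*x$2 + x$2*x$3 + x$3*x$1"
definition snorm :: "'a::comm_ring_1^3 \<Rightarrow> 'a" where
  "snorm x = x$1*x$2*x$3"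
definition scross :: "'a::comm_ring_1^3 \<Rightarrow> 'a^3 \<Rightarrow> 'a^3" where
  "scross x y = sadj (x + y) - sadj x - sadj y"

lemma sadj_comp[simp]: "sadj x $ 1 = x$2*x$3" "sadj x $ 2 = x$3*x$1" "sadj x $ 3 = x$1*x$2"
  by (simp_all add: sadj_def)
lemma scross_comp[simp]: "scross x y $ 1 = x$2*y$3 + x$3*y$2" "scross x y $ 2 = x$3*y$1 + x$1*y$3"
  "scross x y $ 3 = x$1*y$2 + x$2*y$1"
  by (simp_all add: scross_def algebra_simps)

locale esplit = ecub m u for m :: "'f::field^3 \<Rightarrow> 'f^3 \<Rightarrow> 'f^3" and u +
  fixes t :: "'f^3" and lam :: "'f alg_closure^3"
  assumes D: "det3 u t (m t t) \<noteq> 0"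
    and V1: "lam$1 + lam$2 + lam$3 = to_ac (Etr m t)"
    and V2: "lam$1*lam$2 + lam$2*lam$3 + lam$3*lam$1 = to_ac (Esec m t)"
    and V3: "lam$1*lam$2*lam$3 = to_ac (Enorm m t)"
begin

abbreviation "t2 \<equiv> m t t"
abbreviation "DD \<equiv> det3 u t t2"
definition "c0 z = det3 z t t2 / DD"
definition "c1 z = det3 u z t2 / DD"
definition "c2 z = det3 u t z / DD"
definition psi :: "'f^3 \<Rightarrow> 'f alg_closure^3" where
  "psi z = (\<chi> i. to_ac (c0 z) + to_ac (c1 z) * lam$i + to_ac (c2 z) * (lam$i)^2)"

abbreviation "T0 \<equiv> Etr m t"
abbreviation "S0 \<equiv> Esec m t"
abbreviation "N0 \<equiv> Enorm m t"

lemma root: "(lam$i)^3 = to_ac T0 * (lam$i)^2 - to_ac S0 * lam$i + to_ac N0"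
proof -
  have id: "(xx - lam$1)*(xx - lam$2)*(xx - lam$3) = xx^3 - (lam$1+lam$2+lam$3)*xx^2
     + (lam$1*lam$2+lam$2*lam$3+lam$3*lam$1)*xx - lam$1*lam$2*lam$3" for xx
    by Groebner_Basis.algebra
  have "(lam$i - lam$1)*(lam$i - lam$2)*(lam$i - lam$3) = 0"
    using exhaust_3[of i] by auto
  then show ?thesis using id[of "lam$i"] unfolding V1 V2 V3 by (simp add: algebra_simps)
qed

lemma t3: "m t t2 = T0 *s t2 - S0 *s t + N0 *s u"
  using CH_E[of t] by (simp add: algebra_simps)

lemma rep: "z = c0 z *s u + c1 z *s t + c2 z *s t2"
  unfolding c0_def c1_def c2_def by (rule cramer[OF D])

lemma psi_rep: assumes "z = a0 *s u + a1 *s t + a2 *s t2"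
  shows "psi z = (\<chi> i. to_ac a0 + to_ac a1 * lam$i + to_ac a2 * (lam$i)^2)"
proof -
  have "c0 z *s u + c1 z *s t + c2 z *s t2 = a0 *s u + a1 *s t + a2 *s t2" using rep assms by simp
  from coord_unique[OF D this] show ?thesis unfolding psi_def by simp
qed

lemma psi_add: "psi (x + y) = psi x + psi y"
proof -
  have "x + y = (c0 x + c0 y) *s u + (c1 x + c1 y) *s t + (c2 x + c2 y) *s t2"
    by (subst rep[of x], subst rep[of y]) (simp add: vec_eq_iff algebra_simps)
  then have "psi (x + y) = (\<chi> i. to_ac (c0 x + c0 y) + to_ac (c1 x + c1 y) * lam$i + to_ac (c2 x + c2 y) * (lam$i)^2)"
    by (rule psi_rep)
  then show ?thesis unfolding psi_rep[OF rep[of x]] psi_rep[OF rep[of y]]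
    by (simp add: vec_eq_iff algebra_simps)
qed

lemma psi_smult: "psi (c *s x) = to_ac c *s psi x"
proof -
  have "c *s x = (c * c0 x) *s u + (c * c1 x) *s t + (c * c2 x) *s t2"
    by (subst rep[of x]) (simp add: vec_eq_iff algebra_simps)
  then have "psi (c *s x) = (\<chi> i. to_ac (c * c0 x) + to_ac (c * c1 x) * lam$i + to_ac (c * c2 x) * (lam$i)^2)"
    by (rule psi_rep)
  then show ?thesis unfolding psi_rep[OF rep[of x]]
    by (simp add: vec_eq_iff algebra_simps)
qed

lemma psi_u: "psi u = 1"
proof -
  have "u = 1 *s u + 0 *s t + 0 *s t2" by simp
  then have "psi u = (\<chi> i. to_ac 1 + to_ac 0 * lam$i + to_ac 0 * (lam$i)^2)"
    by (rule psi_rep)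
  then show ?thesis by (simp add: vec_eq_iff)
qed

lemma t2t2: "m t2 t2 = (T0*T0 - S0) *s t2 + (N0 - T0*S0) *s t + (T0*N0) *s u"
proof -
  have "m t2 t2 = m t (m t t2)" by (metis massoc)
  also have "\<dots> = T0 *s m t t2 - S0 *s t2 + N0 *s t" by (simp add: t3 mlin)
  also have "\<dots> = (T0*T0 - S0) *s t2 + (N0 - T0*S0) *s t + (T0*N0) *s u"
    by (simp add: t3 vec_eq_iff algebra_simps)
  finally show ?thesis .
qed

lemma mul_rep:
  "m (a0 *s u + a1 *s t + a2 *s t2) (b0 *s u + b1 *s t + b2 *s t2) =
    (a0*b0 + (a1*b2 + a2*b1) * N0 + a2*b2*T0*N0) *s u
  + (a0*b1 + a1*b0 - (a1*b2 + a2*b1) * S0 + a2*b2*(N0 - T0*S0)) *s t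
  + (a0*b2 + a1*b1 + a2*b0 + (a1*b2 + a2*b1) * T0 + a2*b2*(T0*T0 - S0)) *s t2"
proof -
  have e: "m t2 t = m t t2" by (rule mcomm)
  show ?thesis
    by (simp add: mlin e t3 t2t2 vec_eq_iff algebra_simps)
qed

lemma psi_mult: "psi (m x y) = psi x * psi y"
proof -
  have "m x y = m (c0 x *s u + c1 x *s t + c2 x *s t2) (c0 y *s u + c1 y *s t + c2 y *s t2)"
    using rep[of x] rep[of y] by simp
  note eq = this[unfolded mul_rep]
  have "psi (m x y) $ i = (psi x * psi y) $ i" for i
  proof -
    have r: "(lam$i)^3 = to_ac T0 * (lam$i)^2 - to_ac S0 * lam$i + to_ac N0" by (rule root)
    show ?thesis
      unfolding psi_rep[OF eq] psi_rep[OF rep[of x]] psi_rep[OF rep[of y]]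
      using r by simp Groebner_Basis.algebra
  qed
  then show ?thesis by (simp add: vec_eq_iff)
qed

end

context esplit begin

lemma psi_0: "psi 0 = 0" using psi_smult[of 0 0] by simp
lemma psi_neg: "psi (- x) = - psi x"
  using psi_smult[of "-1" x] by (simp add: vector_sneg_minus1[symmetric])
lemma psi_diff: "psi (x - y) = psi x - psi y"
  using psi_add[of x "-y"] psi_neg[of y] by simp

lemma Etr_t2: "Etr m t2 = T0^2 - 2 * S0"
  using Esec_alt[of t] two by (simp add: field_simps)

lemma psi_tr: "to_ac (Etr m z) = str (psi z)"
proof -
  have "Etr m z = Etr m (c0 z *s u + c1 z *s t + c2 z *s t2)" using rep[of z] by simp
  also have "\<dots> = 3 * c0 z + c1 z * T0 + c2 z * (T0^2 - 2 * S0)"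
    by (simp add: Etr_add Etr_smult Etr_u Etr_t2 algebra_simps)
  finally have e: "Etr m z = 3 * c0 z + c1 z * T0 + c2 z * (T0^2 - 2 * S0)" .
  show ?thesis unfolding e psi_def str_def
    by (simp add: V1[symmetric] V2[symmetric] algebra_simps power2_eq_square)
qed

lemma psi_inj: "psi x = psi y \<Longrightarrow> x = y"
proof -
  assume "psi x = psi y"
  then have z: "psi (x - y) = 0" by (simp add: psi_diff)
  have "Etr m (m (x - y) w) = 0" for w
  proof -
    have "to_ac (Etr m (m (x - y) w)) = 0" by (simp add: psi_tr psi_mult z str_def)
    then show ?thesis by simp
  qed
  then have "x - y = 0" by (rule etale_nd)
  then show "x = y" by simp
qed

lemma psi_sec: "to_ac (Esec m z) = ssec (psi z)"
proof -
  have "to_ac (Esec m z) = ((to_ac (Etr m z))^2 - to_ac (Etr m (m z z))) / 2"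
    by (simp add: Esec_alt)
  also have "\<dots> = ((str (psi z))^2 - str (psi z * psi z)) / 2"
    by (simp add: psi_tr psi_mult)
  also have "\<dots> = ssec (psi z)"
  proof -
    have "(2::'f alg_closure) \<noteq> 0" using two by (metis to_ac_eq_0_iff to_ac_numeral)
    then show ?thesis by (simp add: str_def ssec_def field_simps power2_eq_square)
  qed
  finally show ?thesis .
qed

lemma psi_adj: "psi (Eadj m u z) = sadj (psi z)"
  by (simp add: Eadj_def psi_add psi_diff psi_smult psi_mult psi_u psi_tr psi_sec vec_eq_iff forall_3
      str_def ssec_def algebra_simps)

lemma psi_norm: "to_ac (Enorm m z) = snorm (psi z)"
proof -
  have "psi (m z (Eadj m u z)) = to_ac (Enorm m z) *s 1" by (simp add: adj_N psi_smult psi_u)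
  then have "(psi z * sadj (psi z)) $ 1 = to_ac (Enorm m z)"
    by (simp add: psi_mult psi_adj)
  then show ?thesis by (simp add: snorm_def algebra_simps)
qed

lemma psi_cross: "psi (Ecross m u x y) = scross (psi x) (psi y)"
  by (simp add: Ecross_def scross_def psi_diff psi_add psi_adj)

lemmas psi_simps = psi_0 psi_neg psi_diff psi_add psi_smult psi_mult psi_u psi_adj psi_cross

end

context esplit begin

lemma psi_pair_inj: "psi (fst p) = psi (fst q) \<Longrightarrow> psi (snd p) = psi (snd q) \<Longrightarrow> p = q"
  by (metis prod_eq_iff psi_inj)

lemma psi_num: "psi (numeral k * x) = numeral k * psi x"
proof -
  have "numeral k * x = (numeral k :: 'f) *s x" by (simp add: vec_eq_iff)
  show ?thesis unfolding \<open>numeral k * x = (numeral k :: 'f) *s x\<close> by (simp add: psi_smult vec_eq_iff)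
qed

lemmas X = psi_num phi_Q_def phi_beta_def polar_def Cscal_def psi_simps psi_tr str_def psi_norm snorm_def
  Delta_def

lemma Qbeta: "phi_Q m u (a,e,f,b) (phi_beta m u (a,e,f,b) (x,y)) = Eadj m u (phi_Q m u (a,e,f,b) (x,y))"
  apply (rule psi_inj)
  apply (simp add: X)
  apply (simp add: vec_eq_iff forall_3)
  apply (intro conjI; Groebner_Basis.algebra)
  done

lemma L1: "phi_Q m u (a,e,f,b) (Cscal m c (x,y)) = m (m c c) (phi_Q m u (a,e,f,b) (x,y))"
  apply (rule psi_inj)
  apply (simp add: X)
  apply (simp add: vec_eq_iff forall_3)
  apply (intro conjI; Groebner_Basis.algebra)
  done

lemma L2: "polar (phi_Q m u (a,e,f,b)) ((x,y)+(x',y')) (z1,z2)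
   = polar (phi_Q m u (a,e,f,b)) (x,y) (z1,z2) + polar (phi_Q m u (a,e,f,b)) (x',y') (z1,z2)"
  apply (rule psi_inj)
  apply (simp add: X)
  apply (simp add: vec_eq_iff forall_3)
  apply (intro conjI; Groebner_Basis.algebra)
  done

lemma L3: "polar (phi_Q m u (a,e,f,b)) (Cscal m c (x,y)) (z1,z2)
   = m c (polar (phi_Q m u (a,e,f,b)) (x,y) (z1,z2))"
  apply (rule psi_inj)
  apply (simp add: X)
  apply (simp add: vec_eq_iff forall_3)
  apply (intro conjI; Groebner_Basis.algebra)
  done

lemma L5: "polar (phi_beta m u (a,e,f,b)) ((x,y)+(x',y')) (z1,z2)
   = polar (phi_beta m u (a,e,f,b)) (x,y) (z1,z2) + polar (phi_beta m u (a,e,f,b)) (x',y') (z1,z2)"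
  apply (rule psi_pair_inj)
  apply (simp_all add: X)
  apply (simp_all add: vec_eq_iff forall_3)
  apply (intro conjI; Groebner_Basis.algebra)+
  done

lemma L6: "polar (phi_beta m u (a,e,f,b)) (Cscal m (c *s u) (x,y)) (z1,z2)
   = Cscal m (c *s u) (polar (phi_beta m u (a,e,f,b)) (x,y) (z1,z2))"
  apply (rule psi_pair_inj)
  apply (simp_all add: X)
  apply (simp_all add: vec_eq_iff forall_3)
  apply (intro conjI; Groebner_Basis.algebra)+
  done

lemma L7: "phi_beta m u (a,e,f,b) (Cscal m c (x,y)) = Cscal m (Eadj m u c) (phi_beta m u (a,e,f,b) (x,y))"
  apply (rule psi_pair_inj)
  apply (simp_all add: X)
  apply (simp_all add: vec_eq_iff forall_3)
  apply (intro conjI; Groebner_Basis.algebra)+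
  done

end

context esplit begin

lemma disc_x: "Delta m u (a,e,f,b) *s x =
   m (- (a * b) *s u - 2 *s m e f + Etr m (m e f) *s u) (polar (phi_Q m u (a,e,f,b)) (x,y) (0,u))
   - 2 *s m (Eadj m u f - b *s e) (polar (phi_Q m u (a,e,f,b)) (x,y) (u,0))"
  apply (rule psi_inj)
  apply (simp add: X)
  apply (simp add: vec_eq_iff forall_3)
  apply (intro conjI; Groebner_Basis.algebra)
  done

lemma disc_y: "Delta m u (a,e,f,b) *s y =
   m (- (a * b) *s u - 2 *s m e f + Etr m (m e f) *s u) (polar (phi_Q m u (a,e,f,b)) (x,y) (u,0))
   - 2 *s m (Eadj m u e - a *s f) (polar (phi_Q m u (a,e,f,b)) (x,y) (0,u))"
  apply (rule psi_inj)
  apply (simp add: X)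
  apply (simp add: vec_eq_iff forall_3)
  apply (intro conjI; Groebner_Basis.algebra)
  done

lemma L4: assumes "Delta m u (a,e,f,b) \<noteq> 0" and "\<forall>z. polar (phi_Q m u (a,e,f,b)) (x,y) z = 0"
  shows "(x,y) = 0"
proof -
  have z1: "polar (phi_Q m u (a,e,f,b)) (x,y) (0,u) = 0" and z2: "polar (phi_Q m u (a,e,f,b)) (x,y) (u,0) = 0"
    using assms(2) by blast+
  have "Delta m u (a,e,f,b) *s x = 0" unfolding disc_x[of a e f b x y] z1 z2 by (simp add: m0_r)
  then have "x = 0" using assms(1) by (metis vector_mul_eq_0)
  moreover have "Delta m u (a,e,f,b) *s y = 0" unfolding disc_y[of a e f b y x] z1 z2 by (simp add: m0_r)
  then have "y = 0" using assms(1) by (metis vector_mul_eq_0)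
  ultimately show ?thesis by (simp add: zero_prod_def)
qed

lemma polar_bil: "polar (phi_Q m u (a,e,f,b)) (x,y) (x',y') =
   2 *s m (Eadj m u e - a *s f) (m x x') + m (- (a * b) *s u - 2 *s m e f + Etr m (m e f) *s u) (m x y' + m x' y)
   + 2 *s m (Eadj m u f - b *s e) (m y y')"
  apply (rule psi_inj)
  apply (simp add: X)
  apply (simp add: vec_eq_iff forall_3)
  apply (intro conjI; Groebner_Basis.algebra)
  done

lemma L9: "\<exists>c. polar (phi_Q m u (a,e,f,b)) (x,y) (phi_beta m u (a,e,f,b) (x,y)) = c *s u"
proof -
  define P where "P = polar (phi_Q m u (a,e,f,b)) (x,y) (phi_beta m u (a,e,f,b) (x,y))"
  have h1: "psi P $ 1 = psi P $ 2" unfolding P_def phi_beta_def polar_bil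
    apply (simp add: X)
    apply Groebner_Basis.algebra
    done
  have h2: "psi P $ 2 = psi P $ 3" unfolding P_def phi_beta_def polar_bil
    apply (simp add: X)
    apply Groebner_Basis.algebra
    done
  have t3: "(3::'f alg_closure) \<noteq> 0" using three by (metis to_ac_eq_0_iff to_ac_numeral)
  have "psi P = psi ((Etr m P / 3) *s u)"
    using h1 h2 t3 by (simp add: psi_smult psi_u psi_tr str_def vec_eq_iff forall_3 field_simps)
  then have "P = (Etr m P / 3) *s u" by (rule psi_inj)
  then show ?thesis unfolding P_def by blast
qed

lemma tca: assumes "Delta m u (a,e,f,b) \<noteq> 0"
  shows "twisted_comp_alg m u (phi_Q m u (a,e,f,b)) (phi_beta m u (a,e,f,b))"
  unfolding twisted_comp_alg_def
  using L1 L2 L3 L4[OF assms] L5 L6 L7 Qbeta L9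
  by (simp add: split_paired_all)

end

context esplit begin

definition "cube_w d g v = (case g of (g11, g12, g21, g22) \<Rightarrow> (case v of (a, e, f, b) \<Rightarrow>
  (inverse d * cube_form m u v (g11, g12),
   inverse d *s (a *s m g21 (Eadj m u g11) + m e (m g22 (Eadj m u g11)) + m g21 (Ecross m u (m e g12) g11)
      + m f (m g21 (Eadj m u g12)) + m g22 (Ecross m u (m f g11) g12) + b *s m g22 (Eadj m u g12)),
   inverse d *s (a *s m g11 (Eadj m u g21) + m e (m g12 (Eadj m u g21)) + m g11 (Ecross m u (m e g22) g21)
      + m f (m g11 (Eadj m u g22)) + m g12 (Ecross m u (m f g21) g22) + b *s m g12 (Eadj m u g22)),
   inverse d * cube_form m u v (g21, g22))))"

lemmas Y = X cube_form_def cube_w_def Emat_apply_def Emat_trans_def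

lemma cube_w_form: "cube_form m u (cube_w d (g11,g12,g21,g22) (a,e,f,b)) (x,y)
   = inverse d * cube_form m u (a,e,f,b) (Emat_apply m (Emat_trans (g11,g12,g21,g22)) (x,y))"
  apply (subst to_ac_eq_iff[symmetric])
  apply (simp add: Y)
  apply Groebner_Basis.algebra
  done

lemma cube_w_beta: "phi_beta m u (cube_w d (g11,g12,g21,g22) (a,e,f,b)) (x,y) =
   Emat_apply m (inverse d *s g22, -(inverse d *s g21), -(inverse d *s g12), inverse d *s g11)
     (phi_beta m u (a,e,f,b) (Emat_apply m (Emat_trans (g11,g12,g21,g22)) (x,y)))"
  apply (rule psi_pair_inj)
  apply (simp_all add: Y)
  apply (simp_all add: vec_eq_iff forall_3)
  apply (intro conjI; Groebner_Basis.algebra)+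
  done

definition "cube_w0 g v = (case g of (g11, g12, g21, g22) \<Rightarrow> (case v of (a, e, f, b) \<Rightarrow>
  (cube_form m u v (g11, g12),
   (a *s m g21 (Eadj m u g11) + m e (m g22 (Eadj m u g11)) + m g21 (Ecross m u (m e g12) g11)
      + m f (m g21 (Eadj m u g12)) + m g22 (Ecross m u (m f g11) g12) + b *s m g22 (Eadj m u g12)),
   (a *s m g11 (Eadj m u g21) + m e (m g12 (Eadj m u g21)) + m g11 (Ecross m u (m e g22) g21)
      + m f (m g11 (Eadj m u g22)) + m g12 (Ecross m u (m f g21) g22) + b *s m g12 (Eadj m u g22)),
   cube_form m u v (g21, g22))))"

definition "cscale c v = (case v of (a, e, f, b) \<Rightarrow> (c * a, c *s e, c *s f, c * b))"

lemma cube_w_scale: "cube_w d g v = cscale (inverse d) (cube_w0 g v)"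
  by (simp add: cube_w_def cube_w0_def cscale_def split: prod.splits)

lemma phi_Q_scale: "phi_Q m u (cscale c (a,e,f,b)) (x,y) = (c * c) *s phi_Q m u (a,e,f,b) (x,y)"
  apply (rule psi_inj)
  apply (simp add: Y cscale_def)
  apply (simp add: vec_eq_iff forall_3)
  apply (intro conjI; Groebner_Basis.algebra)
  done

lemma cube_w0_Q: "phi_Q m u (cube_w0 (g11,g12,g21,g22) (a,e,f,b)) (x,y) =
    m (Eadj m u (m g11 g22 - m g12 g21)) (phi_Q m u (a,e,f,b) (Emat_apply m (Emat_trans (g11,g12,g21,g22)) (x,y)))"
  apply (rule psi_inj)
  apply (simp add: Y cube_w0_def)
  apply (simp add: vec_eq_iff forall_3)
  apply (intro conjI; Groebner_Basis.algebra)
  done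

end

context esplit begin

lemma cube_w_Q: assumes det: "m g11 g22 - m g12 g21 = d *s u" and d: "d \<noteq> 0"
  shows "phi_Q m u (cube_w d (g11,g12,g21,g22) (a,e,f,b)) (x,y) =
    phi_Q m u (a,e,f,b) (Emat_apply m (Emat_trans (g11,g12,g21,g22)) (x,y))"
proof -
  obtain a' e' f' b' where c0: "cube_w0 (g11,g12,g21,g22) (a,e,f,b) = (a',e',f',b')" by (cases "cube_w0 (g11,g12,g21,g22) (a,e,f,b)") auto
  have adj: "Eadj m u (d *s u) = (d * d) *s u"
    by (rule psi_inj) (simp add: psi_simps vec_eq_iff forall_3)
  have "phi_Q m u (cube_w d (g11,g12,g21,g22) (a,e,f,b)) (x,y)
     = (inverse d * inverse d) *s phi_Q m u (cube_w0 (g11,g12,g21,g22) (a,e,f,b)) (x,y)"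
    unfolding cube_w_scale c0 by (rule phi_Q_scale)
  also have "\<dots> = (inverse d * inverse d) *s m ((d * d) *s u) (phi_Q m u (a,e,f,b) (Emat_apply m (Emat_trans (g11,g12,g21,g22)) (x,y)))"
    unfolding cube_w0_Q det adj ..
  also have "\<dots> = phi_Q m u (a,e,f,b) (Emat_apply m (Emat_trans (g11,g12,g21,g22)) (x,y))"
  proof -
    have "inverse d * inverse d * (d * d) = 1" using d by (simp add: field_simps)
    then show ?thesis by (simp add: msc_l munit_l vector_smult_assoc)
  qed
  finally show ?thesis .
qed

lemma cf_a: "cube_form m u (a,e,f,b) (u,0) = a"
  apply (subst to_ac_eq_iff[symmetric])
  apply (simp add: Y)
  done

lemma cf_b: "cube_form m u (a,e,f,b) (0,u) = b"
  apply (subst to_ac_eq_iff[symmetric])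
  apply (simp add: Y)
  done

lemma cf_e: "cube_form m u (a,e,f,b) (u,y) - cube_form m u (a,e,f,b) (u,-y) = 2 * Etr m (m e y) + 2 * b * Enorm m y"
  apply (subst to_ac_eq_iff[symmetric])
  apply (simp add: Y)
  done

lemma cf_f: "cube_form m u (a,e,f,b) (x,u) - cube_form m u (a,e,f,b) (-x,u) = 2 * a * Enorm m x + 2 * Etr m (m f x)"
  apply (subst to_ac_eq_iff[symmetric])
  apply (simp add: Y)
  done

lemma cube_form_inj: assumes "\<forall>w. cube_form m u v1 w = cube_form m u v2 w" shows "v1 = v2"
proof -
  obtain a1 e1 f1 b1 where v1: "v1 = (a1,e1,f1,b1)" by (cases v1) auto
  obtain a2 e2 f2 b2 where v2: "v2 = (a2,e2,f2,b2)" by (cases v2) auto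
  have a: "a1 = a2" using assms cf_a v1 v2 by metis
  have b: "b1 = b2" using assms cf_b v1 v2 by metis
  have "Etr m (m (e1 - e2) y) = 0" for y
  proof -
    have "2 * Etr m (m e1 y) + 2 * b1 * Enorm m y = 2 * Etr m (m e2 y) + 2 * b2 * Enorm m y"
      using cf_e[of a1 e1 f1 b1 y] cf_e[of a2 e2 f2 b2 y] assms v1 v2 by metis
    then have "2 * Etr m (m e1 y) = 2 * Etr m (m e2 y)" using b by simp
    then have "Etr m (m e1 y) = Etr m (m e2 y)" using two by simp
    then show ?thesis by (simp add: mdiff_l Etr_diff)
  qed
  then have e: "e1 = e2" using etale_nd[of "e1 - e2"] by simp
  have "Etr m (m (f1 - f2) x) = 0" for x
  proof -
    have "2 * a1 * Enorm m x + 2 * Etr m (m f1 x) = 2 * a2 * Enorm m x + 2 * Etr m (m f2 x)"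
      using cf_f[of a1 e1 f1 b1 x] cf_f[of a2 e2 f2 b2 x] assms v1 v2 by metis
    then have "2 * Etr m (m f1 x) = 2 * Etr m (m f2 x)" using a by simp
    then have "Etr m (m f1 x) = Etr m (m f2 x)" using two by simp
    then show ?thesis by (simp add: mdiff_l Etr_diff)
  qed
  then have f: "f1 = f2" using etale_nd[of "f1 - f2"] by simp
  show ?thesis using v1 v2 a b e f by simp
qed

lemma smul_u_cancel: "c *s u = d *s u \<Longrightarrow> c = d"
proof -
  assume "c *s u = d *s u"
  then have "(c - d) *s u = 0" by (simp add: vector_sub_rdistrib)
  then show "c = d" using u_nz by (metis vector_mul_eq_0 right_minus_eq)
qed

lemma Einv_scal: "d \<noteq> 0 \<Longrightarrow> Einv m u (d *s u) = inverse d *s u"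
  unfolding Einv_def
proof (rule the_equality)
  assume "d \<noteq> 0"
  then show "m (d *s u) (inverse d *s u) = u" by (simp add: msc_l msc_r munit_l vector_smult_assoc)
next
  fix w assume "d \<noteq> 0" "m (d *s u) w = u"
  then have "d *s w = u" by (simp add: msc_l munit_l)
  then have "inverse d *s (d *s w) = inverse d *s u" by simp
  then show "w = inverse d *s u" using \<open>d \<noteq> 0\<close> by (simp add: vector_smult_assoc)
qed

lemma GL_part:
  assumes "GL2_0 m u g"
  shows "phi m u (cube_act m u g v) = pair_act m u (Emat_inv m u (Emat_trans g)) (phi m u v)"
proof -
  obtain g11 g12 g21 g22 where g: "g = (g11,g12,g21,g22)" by (cases g) auto
  obtain a e f b where v: "v = (a,e,f,b)" by (cases v) auto
  obtain d where d: "d \<noteq> 0" and det: "m g11 g22 - m g12 g21 = d *s u"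
    using assms unfolding GL2_0_def g Emat_det_def by auto
  have ds: "det_scalar m u g = d"
    unfolding det_scalar_def g Emat_det_def
    by (rule the_equality) (use det smul_u_cancel in auto)
  have act: "cube_act m u g v = cube_w d g v"
    unfolding cube_act_def ds
  proof (rule the_equality)
    show "\<forall>w. cube_form m u (cube_w d g v) w = inverse d * cube_form m u v (Emat_apply m (Emat_trans g) w)"
      unfolding g v by (auto simp: cube_w_form)
  next
    fix v' assume h: "\<forall>w. cube_form m u v' w = inverse d * cube_form m u v (Emat_apply m (Emat_trans g) w)"
    show "v' = cube_w d g v"
      apply (rule cube_form_inj)
      using h unfolding g v by (auto simp: cube_w_form)
  qed
  have di: "Einv m u (d *s u) = inverse d *s u" using Einv_scal[OF d] .
  have det': "m g11 g22 - m g21 g12 = d *s u" using det mcomm by metis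
  have inv1: "Emat_inv m u (Emat_trans g) = (inverse d *s g22, -(inverse d *s g21), -(inverse d *s g12), inverse d *s g11)"
    unfolding g Emat_trans_def Emat_inv_def Emat_det_def
    by (simp add: det' di msc_l munit_l)
  have det2: "m (inverse d *s g22) (inverse d *s g11) - m (- (inverse d *s g21)) (- (inverse d *s g12)) = inverse d *s u"
  proof -
    have "m (inverse d *s g22) (inverse d *s g11) - m (- (inverse d *s g21)) (- (inverse d *s g12))
        = (inverse d * inverse d) *s (m g11 g22 - m g12 g21)"
      by (simp add: msc_l msc_r mneg_l mneg_r vector_smult_assoc vector_ssub_ldistrib mcomm[of g22 g11] mcomm[of g21 g12])
    also have "\<dots> = inverse d *s u" using d by (simp add: det vector_smult_assoc)
    finally show ?thesis .
  qed
  have di2: "Einv m u (inverse d *s u) = d *s u" using Einv_scal[of "inverse d"] d by simp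
  have inv2a: "Emat_inv m u (inverse d *s g22, -(inverse d *s g21), -(inverse d *s g12), inverse d *s g11)
     = (m (d *s u) (inverse d *s g11), - m (d *s u) (-(inverse d *s g21)), - m (d *s u) (-(inverse d *s g12)),
        m (d *s u) (inverse d *s g22))"
    unfolding Emat_inv_def Emat_det_def Let_def by (simp only: prod.case det2 di2)
  have inv2: "Emat_inv m u (Emat_inv m u (Emat_trans g)) = Emat_trans g"
    unfolding inv1 inv2a using d by (simp add: g Emat_trans_def msc_l msc_r mneg_r munit_l vector_smult_assoc)
  have Q: "phi_Q m u (cube_w d g v) = phi_Q m u v \<circ> Emat_apply m (Emat_trans g)"
  proof (rule ext)
    fix w :: "'f Cpair"
    obtain x y where w: "w = (x,y)" by (cases w) auto
    show "phi_Q m u (cube_w d g v) w = (phi_Q m u v \<circ> Emat_apply m (Emat_trans g)) w"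
      unfolding w g v comp_def by (rule cube_w_Q[OF det d])
  qed
  have B: "phi_beta m u (cube_w d g v) = Emat_apply m (Emat_inv m u (Emat_trans g)) \<circ> phi_beta m u v \<circ> Emat_apply m (Emat_trans g)"
  proof (rule ext)
    fix w :: "'f Cpair"
    obtain x y where w: "w = (x,y)" by (cases w) auto
    show "phi_beta m u (cube_w d g v) w = (Emat_apply m (Emat_inv m u (Emat_trans g)) \<circ> phi_beta m u v \<circ> Emat_apply m (Emat_trans g)) w"
      unfolding w g v comp_def inv1[unfolded g] by (rule cube_w_beta)
  qed
  show ?thesis
    unfolding act inv2 pair_act_def phi_def using Q B by simp
qed

end

context esplit begin

lemma beta_u0: "phi_beta m u (a,e,f,b) (u,0) = (-e, a *s u)"
  apply (rule psi_pair_inj)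
  apply (simp_all add: Y)
  apply (simp_all add: vec_eq_iff forall_3)
  done

lemma beta_0u: "phi_beta m u (a,e,f,b) (0,u) = (-(b *s u), f)"
  apply (rule psi_pair_inj)
  apply (simp_all add: Y)
  apply (simp_all add: vec_eq_iff forall_3)
  done

lemma inj_phi: "inj (phi m u)"
proof (rule injI)
  fix v1 v2 assume h: "phi m u v1 = phi m u v2"
  obtain a1 e1 f1 b1 where v1: "v1 = (a1,e1,f1,b1)" by (cases v1) auto
  obtain a2 e2 f2 b2 where v2: "v2 = (a2,e2,f2,b2)" by (cases v2) auto
  have hb: "phi_beta m u v1 = phi_beta m u v2" using h unfolding phi_def by simp
  have 1: "(-e1, a1 *s u) = (-e2, a2 *s u)" using hb beta_u0 v1 v2 by metis
  have 2: "(-(b1 *s u), f1) = (-(b2 *s u), f2)" using hb beta_0u v1 v2 by metis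
  have "e1 = e2" "f1 = f2" using 1 2 by auto
  moreover have "a1 = a2" using 1 smul_u_cancel by auto
  moreover have "b1 *s u = b2 *s u" using 2 by (metis neg_equal_iff_equal prod.inject)
  then have "b1 = b2" using smul_u_cancel by auto
  ultimately show "v1 = v2" using v1 v2 by simp
qed

end

context ecub begin

lemma exists_split: "\<exists>t lam. esplit m u t lam"
proof -
  obtain t where D: "det3 u t (m t t) \<noteq> 0" using primitive by blast
  obtain l1 l2 l3 where V: "l1 + l2 + l3 = to_ac (Etr m t)" "l1*l2 + l2*l3 + l3*l1 = to_ac (Esec m t)"
    "l1*l2*l3 = to_ac (Enorm m t)"
    using cubic_split by blast
  define lam :: "'f alg_closure^3" where "lam = vector [l1, l2, l3]"
  have "esplit m u t lam"
    by (unfold_locales) (use D V in \<open>simp_all add: lam_def\<close>)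
  then show ?thesis by blast
qed

end

context ecub begin

lemma gal_part:
  assumes A: "F_alg_aut m u \<sigma>"
  shows "phi m u (cube_gal \<sigma> v) = pair_gal \<sigma> (phi m u v)"
proof -
  have bij: "bij \<sigma>" and sadd: "\<And>x y. \<sigma> (x + y) = \<sigma> x + \<sigma> y"
    and ssc: "\<And>c x. \<sigma> (c *s x) = c *s \<sigma> x" and smul: "\<And>x y. \<sigma> (m x y) = m (\<sigma> x) (\<sigma> y)"
    and su: "\<sigma> u = u"
    using A unfolding F_alg_aut_def by blast+
  define \<tau> where "\<tau> = inv_into UNIV \<sigma>"
  have st: "\<sigma> (\<tau> x) = x" for x using bij unfolding \<tau>_def by (simp add: bij_is_surj surj_f_inv_f)
  have ts: "\<tau> (\<sigma> x) = x" for x using bij unfolding \<tau>_def by (simp add: bij_is_inj inv_f_f)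
  have sinj: "\<sigma> x = \<sigma> y \<Longrightarrow> x = y" for x y using ts by metis
  have tadd: "\<tau> (x + y) = \<tau> x + \<tau> y" for x y by (rule sinj) (simp add: sadd st)
  have tsc: "\<tau> (c *s x) = c *s \<tau> x" for c x by (rule sinj) (simp add: ssc st)
  have sneg: "\<sigma> (- x) = - \<sigma> x" for x using ssc[of "-1" x] by (simp add: vector_sneg_minus1[symmetric])
  have sdiff: "\<sigma> (x - y) = \<sigma> x - \<sigma> y" for x y using sadd[of x "-y"] sneg[of y] by simp
  define Pm :: "'f^3^3" where "Pm = (\<chi> i j. (\<sigma> (axis j 1)) $ i)"
  define Qm :: "'f^3^3" where "Qm = (\<chi> i j. (\<tau> (axis j 1)) $ i)"
  have Pm: "Pm *v y = \<sigma> y" for y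
  proof -
    have "\<sigma> y = \<sigma> (y$1 *s axis 1 1 + y$2 *s axis 2 1 + y$3 *s axis 3 1)" by (simp add: basis3[symmetric])
    also have "\<dots> = y$1 *s \<sigma> (axis 1 1) + y$2 *s \<sigma> (axis 2 1) + y$3 *s \<sigma> (axis 3 1)" by (simp add: sadd ssc)
    finally show ?thesis by (simp add: vec_eq_iff Pm_def matrix_vector_mult_def sum_3 mult.commute)
  qed
  have Qm: "Qm *v y = \<tau> y" for y
  proof -
    have "\<tau> y = \<tau> (y$1 *s axis 1 1 + y$2 *s axis 2 1 + y$3 *s axis 3 1)" by (simp add: basis3[symmetric])
    also have "\<dots> = y$1 *s \<tau> (axis 1 1) + y$2 *s \<tau> (axis 2 1) + y$3 *s \<tau> (axis 3 1)" by (simp add: tadd tsc)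
    finally show ?thesis by (simp add: vec_eq_iff Qm_def matrix_vector_mult_def sum_3 mult.commute)
  qed
  have QP: "Qm ** Pm = mat 1"
    by (simp add: matrix_eq matrix_vector_mul_assoc[symmetric] Pm Qm ts)
  have MM: "mult_mat m (\<sigma> x) = Pm ** mult_mat m x ** Qm" for x
    by (simp add: matrix_eq matrix_vector_mul_assoc[symmetric] Pm Qm mm_apply smul st)
  have tr: "Etr m (\<sigma> x) = Etr m x" for x
  proof -
    have "Etr m (\<sigma> x) = trace (Pm ** mult_mat m x ** Qm)" by (simp add: Etr_def MM)
    also have "\<dots> = trace (Qm ** (Pm ** mult_mat m x))" by (rule trace_mul_sym)
    also have "\<dots> = trace (mult_mat m x)" by (simp add: matrix_mul_assoc QP)
    finally show ?thesis by (simp add: Etr_def)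
  qed
  have sec: "Esec m (\<sigma> x) = Esec m x" for x by (simp add: Esec_alt tr smul[symmetric])
  have sadj: "\<sigma> (Eadj m u x) = Eadj m u (\<sigma> x)" for x
    by (simp add: Eadj_def sdiff sadd ssc smul su tr sec)
  have scr: "\<sigma> (Ecross m u x y) = Ecross m u (\<sigma> x) (\<sigma> y)" for x y
    by (simp add: Ecross_def sdiff sadd sadj)
  have tr2: "Etr m (m (\<sigma> x) (\<sigma> y)) = Etr m (m x y)" for x y by (simp add: smul[symmetric] tr)
  obtain a e f b where v: "v = (a,e,f,b)" by (cases v) auto
  have Q: "phi_Q m u (a, \<sigma> e, \<sigma> f, b) (\<sigma> x, \<sigma> y) = \<sigma> (phi_Q m u (a,e,f,b) (x,y))" for x y
    by (simp add: phi_Q_def sdiff sadd ssc smul sadj su tr tr2 sneg)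
  have B: "phi_beta m u (a, \<sigma> e, \<sigma> f, b) (\<sigma> x, \<sigma> y) = map_prod \<sigma> \<sigma> (phi_beta m u (a,e,f,b) (x,y))" for x y
    by (simp add: phi_beta_def sdiff sadd ssc smul sadj su tr tr2 sneg scr)
  have Q': "phi_Q m u (a, \<sigma> e, \<sigma> f, b) = \<sigma> \<circ> phi_Q m u (a,e,f,b) \<circ> map_prod \<tau> \<tau>"
  proof (rule ext)
    fix w :: "'f Cpair"
    obtain x y where w: "w = (x,y)" by (cases w) auto
    show "phi_Q m u (a, \<sigma> e, \<sigma> f, b) w = (\<sigma> \<circ> phi_Q m u (a,e,f,b) \<circ> map_prod \<tau> \<tau>) w"
      using Q[of "\<tau> x" "\<tau> y"] unfolding w by (simp add: st)
  qed
  have B': "phi_beta m u (a, \<sigma> e, \<sigma> f, b) = map_prod \<sigma> \<sigma> \<circ> phi_beta m u (a,e,f,b) \<circ> map_prod \<tau> \<tau>"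
  proof (rule ext)
    fix w :: "'f Cpair"
    obtain x y where w: "w = (x,y)" by (cases w) auto
    show "phi_beta m u (a, \<sigma> e, \<sigma> f, b) w = (map_prod \<sigma> \<sigma> \<circ> phi_beta m u (a,e,f,b) \<circ> map_prod \<tau> \<tau>) w"
      using B[of "\<tau> x" "\<tau> y"] unfolding w by (simp add: st)
  qed
  show ?thesis unfolding v cube_gal_def pair_gal_def phi_def using Q' B' by (simp add: \<tau>_def)
qed

end

theorem proposition10p1:
  fixes m :: "'f::field^3 \<Rightarrow> 'f^3 \<Rightarrow> 'f^3" and u :: "'f^3"
  assumes char2: "(2::'f) \<noteq> 0" and char3: "(3::'f) \<noteq> 0"
    and E: "etale_cubic m u"
  shows "inj (phi m u)
    \<and> (\<forall>g v. GL2_0 m u g \<longrightarrow>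
          phi m u (cube_act m u g v) = pair_act m u (Emat_inv m u (Emat_trans g)) (phi m u v))
    \<and> (\<forall>\<sigma> v. F_alg_aut m u \<sigma> \<longrightarrow> phi m u (cube_gal \<sigma> v) = pair_gal \<sigma> (phi m u v))
    \<and> (\<forall>v. Delta m u v \<noteq> 0 \<longrightarrow> twisted_comp_alg m u (fst (phi m u v)) (snd (phi m u v)))"
proof -
  interpret ecub m u using E char2 char3 by (simp add: ecub_def)
  obtain t lam where "esplit m u t lam" using exists_split by blast
  then interpret esplit m u t lam .
  have III: "Delta m u v \<noteq> 0 \<Longrightarrow> twisted_comp_alg m u (fst (phi m u v)) (snd (phi m u v))" for v
  proof -
    assume h: "Delta m u v \<noteq> 0"
    obtain a e f b where v: "v = (a,e,f,b)" by (cases v) auto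
    show ?thesis using tca[of a e f b] h unfolding v phi_def by simp
  qed
  show ?thesis using inj_phi GL_part gal_part III by blast
qed

end
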